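(* Let $m\ge1$ and $A=(a_0,\ldots,a_m)$ real with $a_0,a_m\ne0$. Suppose $\omega\in\mathbb{C}$ satisfies $P_A(\omega)=0$ and $|\omega|>1$. Then for every $\varepsilon>0$ there exists $n_0$ such that for every $n>n_0$ the polynomial $U_{n,A}$ has a (complex) root $\xi$ with $\left|\xi-\tfrac12(\omega+\omega^{-1})\right|<\varepsilon$.
   Context: $U_k$ denotes the Chebyshev polynomial of the second kind, $U_k(\cos\theta)=\frac{\sin(k+1)\theta}{\sin\theta}$. For $A=(a_0,\ldots,a_m)$ real with $a_0,a_m\ne0$ and $n\ge m$, $U_{n,A}(x)=\sum_{i=0}^m a_iU_{n-i}(x)$ and $P_A(x)=\sum_{i=0}^m a_ix^{m-i}$. *)

theory Defs
  imports "HOL-Analysis.Analysis"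
begin

text \<open>Chebyshev polynomials of the second kind, evaluated at a complex point,
  via the standard recurrence U_0 = 1, U_1 = 2x, U_(k+2) = 2x U_(k+1) - U_k
  (equivalently U_k(cos t) = sin((k+1)t)/sin t).\<close>
fun chebU :: "nat \<Rightarrow> complex \<Rightarrow> complex" where
  "chebU 0 x = 1"
| "chebU (Suc 0) x = 2 * x"
| "chebU (Suc (Suc k)) x = 2 * x * chebU (Suc k) x - chebU k x"

definition UnA :: "nat \<Rightarrow> nat \<Rightarrow> (nat \<Rightarrow> real) \<Rightarrow> complex \<Rightarrow> complex" where
  "UnA n m a x = (\<Sum>i\<le>m. complex_of_real (a i) * chebU (n - i) x)"

definition PA :: "nat \<Rightarrow> (nat \<Rightarrow> real) \<Rightarrow> complex \<Rightarrow> complex" where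
  "PA m a x = (\<Sum>i\<le>m. complex_of_real (a i) * x ^ (m - i))"

end

theory Submission
  imports Defs "HOL-Computational_Algebra.Polynomial" "HOL-Real_Asymp.Real_Asymp" "HOL-Computational_Algebra.Fundamental_Theorem_Algebra"
begin

lemma root_coeff_bound:
  fixes g :: "complex poly" and \<delta> :: real
  assumes dpos: "\<delta> > 0" and roots: "\<And>t. poly g t = 0 \<Longrightarrow> norm t \<ge> \<delta>"
  shows "norm (coeff g k) \<le> real (degree g choose k) * norm (coeff g 0) / \<delta>^k"
  using roots
proof (induction "degree g" arbitrary: g k)
  case 0
  show ?case
  proof (cases k)
    case 0 then show ?thesis by simp
  next
    case (Suc j)
    then have "coeff g k = 0" using 0 by (intro coeff_eq_0) simp
    then show ?thesis using dpos by simp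
  qed
next
  case (Suc d g)
  have "0 < degree g" using Suc(2) by simp
  from fundamental_theorem_of_algebra[of g] this obtain r where r: "poly g r = 0"
    by (auto simp: constant_degree)
  have "[:-r,1:] dvd g" using r by (simp add: poly_eq_0_iff_dvd)
  then obtain h where g: "g = [:-r,1:] * h" by (rule dvdE)
  have "g \<noteq> 0" using \<open>0 < degree g\<close> by auto
  then have hnz: "h \<noteq> 0" using g by auto
  have "degree g = Suc (degree h)" unfolding g using hnz by (subst degree_mult_eq) auto
  then have dh: "d = degree h" using Suc(2) by simp
  have hroots: "\<And>t. poly h t = 0 \<Longrightarrow> norm t \<ge> \<delta>"
    using Suc(3) g by auto
  have IH: "\<And>k. norm (coeff h k) \<le> real (d choose k) * norm (coeff h 0) / \<delta>^k"
    using Suc(1)[OF dh hroots] dh by simp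
  have rd: "norm r \<ge> \<delta>" using Suc(3) r by simp
  have g2: "g = smult (-r) h + pCons 0 h" using g by simp
  have c0: "coeff g 0 = - r * coeff h 0" using g2 by simp
  show ?case
  proof (cases k)
    case 0 then show ?thesis by simp
  next
    case (Suc j)
    have ck: "coeff g k = - r * coeff h (Suc j) + coeff h j" using g2 Suc by simp
    define A where "A = norm (coeff h 0)"
    have A0: "A \<ge> 0" unfolding A_def by simp
    have "norm (coeff g k) \<le> norm r * norm (coeff h (Suc j)) + norm (coeff h j)"
      unfolding ck using norm_triangle_ineq[of "-r * coeff h (Suc j)" "coeff h j"]
      by (simp add: norm_mult)
    also have "\<dots> \<le> norm r * (real (d choose Suc j) * A / \<delta>^Suc j) + real (d choose j) * A / \<delta>^j"
      using IH[of "Suc j"] IH[of j] unfolding A_def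
      by (intro add_mono mult_left_mono) auto
    also have "real (d choose j) * A / \<delta>^j = real (d choose j) * A * \<delta> / \<delta>^Suc j"
      using dpos by simp
    also have "\<dots> \<le> real (d choose j) * A * norm r / \<delta>^Suc j"
      using rd dpos A0 by (intro divide_right_mono mult_left_mono) auto
    also have "norm r * (real (d choose Suc j) * A / \<delta>^Suc j) + real (d choose j) * A * norm r / \<delta>^Suc j
        = real (Suc d choose Suc j) * (norm r * A) / \<delta>^Suc j"
      using dpos by (simp add: field_simps)
    finally show ?thesis using Suc Suc.hyps c0 unfolding A_def by (simp add: norm_mult)
  qed
qed

lemma cheb_identity:
  fixes z :: complex
  assumes "z \<noteq> 0"
  shows "chebU k ((z + inverse z)/2) * (z - inverse z) = z^Suc k - inverse z^Suc k"
proof -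
  define w where "w = inverse z"
  define x where "x = (z + w)/2"
  have zw: "z * w = 1" using assms unfolding w_def by simp
  have "chebU k x * (z - w) = z^Suc k - w^Suc k \<and> chebU (Suc k) x * (z - w) = z^Suc (Suc k) - w^Suc (Suc k)"
  proof (induction k)
    case 0
    show ?case using zw by (simp add: x_def field_simps power2_eq_square)
  next
    case (Suc k)
    have e1: "w * z^Suc (Suc k) = z^Suc k" using zw by (simp add: algebra_simps)
    have e2: "z * w^Suc (Suc k) = w^Suc k"
      by (metis mult.assoc mult.left_commute mult_1 power_Suc zw)
    have "chebU (Suc (Suc k)) x * (z - w) = (z + w) * (chebU (Suc k) x * (z - w)) - chebU k x * (z - w)"
      by (simp add: x_def field_simps)
    also have "\<dots> = (z + w) * (z^Suc (Suc k) - w^Suc (Suc k)) - (z^Suc k - w^Suc k)"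
      using Suc by simp
    also have "\<dots> = z^Suc (Suc (Suc k)) - w^Suc (Suc (Suc k))
        + (w * z^Suc (Suc k) - z^Suc k) - (z * w^Suc (Suc k) - w^Suc k)"
      by (simp add: algebra_simps)
    also have "\<dots> = z^Suc (Suc (Suc k)) - w^Suc (Suc (Suc k))" by (simp only: e1 e2 diff_self) simp
    finally show ?case using Suc by simp
  qed
  then show ?thesis unfolding x_def w_def by simp
qed

lemma pow_inv_cancel:
  fixes z :: complex
  assumes "z \<noteq> 0"
  shows "z^(i + Suc j) * inverse z ^ Suc j = z^i"
  using assms by (simp add: power_add power_inverse field_simps)

theorem theorem5p2:
  fixes m :: nat and a :: "nat \<Rightarrow> real" and \<omega> :: complex
  assumes "m \<ge> 1" and "a 0 \<noteq> 0" and "a m \<noteq> 0"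
    and "PA m a \<omega> = 0" and "norm \<omega> > 1"
  shows "\<forall>\<epsilon>>0. \<exists>n0. \<forall>n>n0. n \<ge> m \<longrightarrow>
           (\<exists>\<xi>. UnA n m a \<xi> = 0 \<and> norm (\<xi> - (\<omega> + inverse \<omega>) / 2) < \<epsilon>)"
proof (intro allI impI)
  fix \<epsilon> :: real assume epos: "\<epsilon> > 0"
  define \<rho> where "\<rho> = norm \<omega>"
  have rho1: "\<rho> > 1" using assms(5) unfolding \<rho>_def .
  have w0: "\<omega> \<noteq> 0" using rho1 \<rho>_def by auto
  define Pp :: "complex poly" where "Pp = (\<Sum>i\<le>m. monom (complex_of_real (a i)) (m - i))"
  define Rp :: "complex poly" where "Rp = (\<Sum>i\<le>m. monom (complex_of_real (a i)) i)"
  have polyP: "\<And>x. poly Pp x = PA m a x" unfolding Pp_def PA_def by (simp add: poly_sum poly_monom)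
  have polyR: "\<And>x. poly Rp x = (\<Sum>i\<le>m. complex_of_real (a i) * x ^ i)"
    unfolding Rp_def by (simp add: poly_sum poly_monom)
  have degP: "degree Pp \<le> m" unfolding Pp_def
    by (intro degree_sum_le) (auto intro: order.trans[OF degree_monom_le])
  have degR: "degree Rp \<le> m" unfolding Rp_def
    by (intro degree_sum_le) (auto intro: order.trans[OF degree_monom_le])
  have "coeff Pp 0 = (\<Sum>i\<le>m. if i = m then complex_of_real (a i) else 0)"
    unfolding Pp_def coeff_sum coeff_monom by (intro sum.cong) auto
  then have cP0: "coeff Pp 0 = complex_of_real (a m)" by simp
  have Pnz: "Pp \<noteq> 0" using cP0 assms(3) by auto
  define P' where "P' = Pp \<circ>\<^sub>p [:\<omega>, 1:]"
  have P'nz: "P' \<noteq> 0" unfolding P'_def using Pnz by (simp add: pcompose_eq_0_iff)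
  obtain Q where Qd: "P' = [:-0,1:]^order 0 P' * Q" and Qnd: "\<not> [:-0,1:] dvd Q"
    using order_decomp[OF P'nz] by blast
  define k where "k = order 0 P'"
  have P'eq: "P' = monom 1 k * Q" using Qd unfolding k_def by (simp add: monom_altdef)
  have q0: "poly Q 0 \<noteq> 0" using Qnd poly_eq_0_iff_dvd[of Q 0] by simp
  define R' where "R' = Rp \<circ>\<^sub>p [:\<omega>, 1:]"
  define B where "B = norm (coeff R' k)"
  define C where "C = norm (poly Rp \<omega>)"
  define H where "H = (\<lambda>e. monom 1 e * Pp - Rp)"
  define g where "g = (\<lambda>e. H e \<circ>\<^sub>p [:\<omega>, 1:])"
  have polyg: "\<And>e t. poly (g e) t = poly (H e) (\<omega> + t)"
    unfolding g_def by (simp add: poly_pcompose)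
  have coeffk: "coeff (g e) k = \<omega>^e * poly Q 0 - coeff R' k" for e
  proof -
    have "g e = (monom 1 e \<circ>\<^sub>p [:\<omega>, 1:]) * P' - R'"
      by (simp add: g_def H_def pcompose_diff pcompose_mult P'_def R'_def)
    also have "\<dots> = monom 1 k * ((monom 1 e \<circ>\<^sub>p [:\<omega>, 1:]) * Q) - R'"
      unfolding P'eq by (simp add: mult_ac)
    finally have "coeff (g e) k = coeff ((monom 1 e \<circ>\<^sub>p [:\<omega>, 1:]) * Q) 0 - coeff R' k"
      by (simp add: coeff_monom_mult)
    also have "\<dots> = \<omega>^e * poly Q 0 - coeff R' k"
      by (simp add: coeff_mult_0 poly_0_coeff_0[symmetric] poly_pcompose poly_monom)
    finally show ?thesis .
  qed
  have coeff0: "coeff (g e) 0 = - poly Rp \<omega>" for e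
  proof -
    have "coeff (g e) 0 = poly (g e) 0" by (simp add: poly_0_coeff_0)
    also have "\<dots> = \<omega>^e * poly Pp \<omega> - poly Rp \<omega>" by (simp add: polyg H_def poly_monom)
    also have "\<dots> = - poly Rp \<omega>" using assms(4) by (simp add: polyP)
    finally show ?thesis .
  qed
  have degg: "degree (g e) \<le> e + m" for e
  proof -
    have "degree (g e) = degree (H e)" unfolding g_def by (simp add: degree_pcompose)
    also have "\<dots> \<le> max (degree (monom 1 e * Pp)) (degree Rp)"
      unfolding H_def by (rule degree_diff_le_max)
    also have "degree (monom 1 e * Pp) \<le> e + m"
      using degree_mult_le[of "monom (1::complex) e" Pp] degree_monom_le[of "1::complex" e] degP by linarith
    finally show ?thesis using degR by linarith
  qed
  define \<delta> where "\<delta> = min \<epsilon> (\<rho> - 1)"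
  have dpos: "\<delta> > 0" using epos rho1 unfolding \<delta>_def by simp
  have l1: "(\<lambda>e::nat. (real e + real m)^k / \<rho>^e) \<longlonglongrightarrow> 0" using rho1 by real_asymp
  have l2: "(\<lambda>e::nat. B / \<rho>^e) \<longlonglongrightarrow> 0" using rho1 by real_asymp
  have "(\<lambda>e::nat. B / \<rho>^e + (real e + real m)^k / \<rho>^e * (C / \<delta>^k)) \<longlonglongrightarrow> 0 + 0 * (C / \<delta>^k)"
    by (intro tendsto_add tendsto_mult l1 l2 tendsto_const)
  then have lim: "(\<lambda>e::nat. (B + (real e + real m)^k * (C / \<delta>^k)) / \<rho>^e) \<longlonglongrightarrow> 0"
    by (simp add: add_divide_distrib mult.commute)
  have "norm (poly Q 0) > 0" using q0 by simp
  from order_tendstoD(2)[OF lim this]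
  obtain N0 where N0: "\<And>e. e \<ge> N0 \<Longrightarrow> (B + (real e + real m)^k * (C / \<delta>^k)) / \<rho>^e < norm (poly Q 0)"
    unfolding eventually_sequentially by blast
  show "\<exists>n0. \<forall>n>n0. n \<ge> m \<longrightarrow>
           (\<exists>\<xi>. UnA n m a \<xi> = 0 \<and> norm (\<xi> - (\<omega> + inverse \<omega>) / 2) < \<epsilon>)"
  proof (rule exI[of _ "N0 + m"], intro allI impI)
    fix n assume "n > N0 + m" and nm: "n \<ge> m"
    define e where "e = 2 * n + 2 - m"
    have eN: "e \<ge> N0" unfolding e_def using \<open>n > N0 + m\<close> by arith
    have "\<exists>t. poly (g e) t = 0 \<and> norm t < \<delta>"
    proof (rule ccontr)
      assume "\<not> ?thesis"
      then have roots: "\<And>t. poly (g e) t = 0 \<Longrightarrow> norm t \<ge> \<delta>" by force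
      define D where "D = degree (g e)"
      have "D choose k \<le> D^k"
        by (cases "k \<le> D") (auto simp: binomial_le_pow binomial_eq_0)
      also have "D^k \<le> (e + m)^k" using degg[of e] unfolding D_def by (intro power_mono) auto
      finally have "real (D choose k) \<le> real ((e+m)^k)" by (simp only: of_nat_le_iff)
      then have chk: "real (D choose k) \<le> (real e + real m)^k" by simp
      have "norm (coeff (g e) k) \<le> real (D choose k) * C / \<delta>^k"
        using root_coeff_bound[where g="g e" and k=k, OF dpos roots] unfolding D_def C_def coeff0 by simp
      also have "\<dots> \<le> (real e + real m)^k * C / \<delta>^k"
        using chk dpos unfolding C_def by (intro divide_right_mono mult_right_mono) auto
      finally have up: "norm (coeff (g e) k) \<le> (real e + real m)^k * (C / \<delta>^k)" by simp
      have "norm (\<omega>^e * poly Q 0) - norm (coeff R' k) \<le> norm (coeff (g e) k)"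
        unfolding coeffk by (rule norm_triangle_ineq2)
      then have "\<rho>^e * norm (poly Q 0) \<le> B + (real e + real m)^k * (C / \<delta>^k)"
        using up unfolding B_def \<rho>_def by (simp add: norm_mult norm_power)
      moreover have "(B + (real e + real m)^k * (C / \<delta>^k)) < norm (poly Q 0) * \<rho>^e"
        using N0[OF eN] rho1 by (simp add: pos_divide_less_eq)
      ultimately show False by (simp add: mult.commute)
    qed
    then obtain t where t0: "poly (g e) t = 0" and tl: "norm t < \<delta>" by blast
    define z where "z = \<omega> + t"
    have Hz: "poly (H e) z = 0" using t0 polyg unfolding z_def by simp
    have "norm \<omega> \<le> norm z + norm t" using norm_triangle_ineq[of z "-t"] by (simp add: z_def)
    then have z1: "norm z > 1" using tl unfolding \<delta>_def \<rho>_def by linarith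
    then have z0: "z \<noteq> 0" by auto
    have zw: "z - inverse z \<noteq> 0"
    proof
      assume "z - inverse z = 0"
      then have "z * z = 1" using z0 by (simp add: field_simps)
      then have "norm z * norm z = 1" by (metis norm_mult norm_one)
      then show False using z0 z1 mult_strict_mono[of 1 "norm z" 1 "norm z"] by simp
    qed
    define \<xi> where "\<xi> = (z + inverse z) / 2"
    have termeq: "z^(n+1) * (z^Suc(n-i) - inverse z^Suc(n-i)) = z^e * z^(m-i) - z^i" if i: "i \<le> m" for i
    proof -
      have ex1: "n+1 + Suc(n-i) = e + (m-i)" using i nm unfolding e_def by arith
      have ex2: "n+1 = i + Suc(n-i)" using i nm by arith
      have "z^(n+1) * z^Suc(n-i) = z^e * z^(m-i)" by (simp only: power_add[symmetric] ex1)
      moreover have "z^(n+1) * inverse z^Suc(n-i) = z^i"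
        using pow_inv_cancel[OF z0, of i "n-i"] ex2 by simp
      ultimately show ?thesis by (simp add: right_diff_distrib)
    qed
    have "z^(n+1) * ((z - inverse z) * UnA n m a \<xi>) =
        (\<Sum>i\<le>m. complex_of_real (a i) * (z^(n+1) * (chebU (n-i) \<xi> * (z - inverse z))))"
      unfolding UnA_def by (simp add: sum_distrib_left mult_ac)
    also have "\<dots> = (\<Sum>i\<le>m. complex_of_real (a i) * (z^(n+1) * (z^Suc(n-i) - inverse z^Suc(n-i))))"
      unfolding \<xi>_def using cheb_identity[OF z0] by simp
    also have "\<dots> = (\<Sum>i\<le>m. complex_of_real (a i) * (z^e * z^(m-i) - z^i))"
      using termeq by (intro sum.cong) auto
    also have "\<dots> = poly (H e) z"
      by (simp add: H_def polyP PA_def polyR poly_monom sum_distrib_left sum_subtractf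
          right_diff_distrib mult_ac)
    finally have "z^(n+1) * ((z - inverse z) * UnA n m a \<xi>) = 0" using Hz by simp
    then have U0: "UnA n m a \<xi> = 0" using z0 zw by simp
    have "\<xi> - (\<omega> + inverse \<omega>) / 2 = (t + (inverse z - inverse \<omega>)) / 2"
      unfolding \<xi>_def z_def by (simp add: field_simps)
    then have "norm (\<xi> - (\<omega> + inverse \<omega>) / 2) = norm (t + (inverse z - inverse \<omega>)) / 2"
      by (simp only: norm_divide) simp
    then have "norm (\<xi> - (\<omega> + inverse \<omega>) / 2) \<le> (norm t + norm (inverse z - inverse \<omega>)) / 2"
      using norm_triangle_ineq[of t "inverse z - inverse \<omega>"] by simp
    moreover have "norm (inverse z - inverse \<omega>) \<le> norm t"
    proof -
      have "inverse z - inverse \<omega> = inverse z * (\<omega> - z) * inverse \<omega>"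
        using division_ring_inverse_diff[OF z0 w0] .
      then have "norm (inverse z - inverse \<omega>) = norm t / (norm z * \<rho>)"
        unfolding z_def \<rho>_def by (simp add: norm_mult norm_inverse norm_minus_commute divide_inverse mult_ac)
      also have "\<dots> \<le> norm t / 1"
        using z0 z1 rho1 mult_strict_mono[of 1 "norm z" 1 \<rho>] by (intro divide_left_mono) auto
      finally show ?thesis by simp
    qed
    ultimately have "norm (\<xi> - (\<omega> + inverse \<omega>) / 2) < \<epsilon>"
      using tl min.cobounded1[of \<epsilon> "\<rho> - 1"] unfolding \<delta>_def by argo
    then show "\<exists>\<xi>. UnA n m a \<xi> = 0 \<and> norm (\<xi> - (\<omega> + inverse \<omega>) / 2) < \<epsilon>"
      using U0 by blast
  qed
qed

end
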